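(* (Setting as in the context.) Let $\bar u\in\mathcal U$, $\bar y\in\mathcal Y$, $\bar v\in\mathcal V$, $\bar z\in\mathcal Z$, $\bar x\in\mathcal X$ be given and $\bar\gamma:=-\Gamma(\bar u,\bar y,\bar v,\bar z)$. Define, with $\mathcal A_0:=\mathcal F$, $$\bar\beta_{p,j}:=\mathcal A_{j-1}\mathcal A_p^*\mathcal E_{\theta_p}^{-1}(b_p-\mathcal A_p\bar x-\mathcal P_p\bar y_p+\sigma\mathcal A_p\bar\gamma),\quad j=1,\dots,p,$$ and for $i=p-1,\dots,1$, $$\bar\beta_{i,j}:=\mathcal A_{j-1}\mathcal A_i^*\mathcal E_{\theta_i}^{-1}\Big(b_i-\sum_{k=i+1}^p\bar\beta_{k,i+1}-\mathcal A_i\bar x-\mathcal P_i\bar y_i+\sigma\mathcal A_i\bar\gamma\Big),\quad j=1,\dots,i,$$ and $\bar\delta_\theta:=\sum_{i=1}^p\bar\beta_{i,1}\in\mathcal U$. For $i=p,p-1,\dots,1$ define (with $y'_{\ge p+1}$ empty) $$y'_i:=\operatorname{argmin}_{y_i}\ \mathcal L_\sigma(\bar u,(\bar y_{\le i-1},y_i,y'_{\ge i+1}),\bar v,\bar z;\bar x)+\tfrac\sigma2\|y_i-\bar y_i\|^2_{\mathcal T_{\theta_i}}.$$ Let $$(u^+,y^+):=\operatorname{argmin}_{u,y}\ \mathcal L_\sigma(u,y,\bar v,\bar z;\bar x)+\tfrac\sigma2\|(u,y_{\le p-1})-(\bar u,\bar y_{\le p-1})\|^2_{\widehat{\mathcal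 T}_{f_p}}+\tfrac\sigma2\|y_p-\bar y_p\|^2_{\mathcal T_{\theta_p}}.$$ Then $(u^+,y^+)$ is obtained exactly by $$u^+=\operatorname{argmin}_u\ \mathcal L_\sigma(u,\bar y,\bar v,\bar z;\bar x)+\langle\bar\delta_\theta,u\rangle+\tfrac\sigma2\|u-\bar u\|^2_{\mathcal T_f},$$ $$y_i^+=\operatorname{argmin}_{y_i}\ \mathcal L_\sigma(u^+,(y^+_{\le i-1},y_i,y'_{\ge i+1}),\bar v,\bar z;\bar x)+\tfrac\sigma2\|y_i-\bar y_i\|^2_{\mathcal T_{\theta_i}},\quad i=1,\dots,p,$$ and also, equivalently, by $$u^+=\operatorname{argmin}_u\ \mathcal L_\sigma(u,y',\bar v,\bar z;\bar x)+\tfrac\sigma2\|u-\bar u\|^2_{\mathcal T_f},$$ $$y_i^+=\operatorname{argmin}_{y_i}\ \mathcal L_\sigma(u^+,(y^+_{\le i-1},y_i,y'_{\ge i+1}),\bar v,\bar z;\bar x)+\tfrac\sigma2\|y_i-\bar y_i\|^2_{\mathcal T_{\theta_i}},\quad i=1,\dots,p.$$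
   Context: Let $p,q\ge1$ be integers and $\mathcal U,\mathcal V,\mathcal X,\mathcal Y_1,\dots,\mathcal Y_p,\mathcal Z_1,\dots,\mathcal Z_q$ real finite-dimensional Euclidean spaces, $\mathcal Y=\mathcal Y_1\times\dots\times\mathcal Y_p$, $\mathcal Z=\mathcal Z_1\times\dots\times\mathcal Z_q$. Let $f:\mathcal U\to(-\infty,+\infty]$, $g:\mathcal V\to(-\infty,+\infty]$ be closed proper convex; $\mathcal F:\mathcal X\to\mathcal U$, $\mathcal G:\mathcal X\to\mathcal V$, $\mathcal A_i:\mathcal X\to\mathcal Y_i$, $\mathcal B_j:\mathcal X\to\mathcal Z_j$ linear; $c\in\mathcal X$; $\theta_i(y_i)=\frac12\langle y_i,\mathcal P_iy_i\rangle-\langle b_i,y_i\rangle$, $\varphi_j(z_j)=\frac12\langle z_j,\mathcal Q_jz_j\rangle-\langle d_j,z_j\rangle$ with $\mathcal P_i,\mathcal Q_j$ self-adjoint positive semidefinite. Write $\mathcal A^*y=\sum_i\mathcal A_i^*y_i$, $\mathcal B^*z=\sum_j\mathcal B_j^*z_j$, $\Gamma(u,y,v,z):=\mathcal F^*u+\mathcal A^*y+\mathcal G^*v+\mathcal B^*z-c$, and for $\sigma>0$ $$\mathcal L_\sigma(u,y,v,z;x):=f(u)+\sum_i\theta_i(y_i)+g(v)+\sum_j\varphi_j(z_j)+\langle x,\Gamma(u,y,v,z)\rangle+\tfrac\sigma2\|\Gamma(u,y,v,z)\|^2.$$ For each $i$, $\mathcal E_{\theta_i}$ is a self-adjoint positive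 definite operator on $\mathcal Y_i$ with $\mathcal E_{\theta_i}\succeq\sigma^{-1}\mathcal P_i+\mathcal A_i\mathcal A_i^*$ and $\mathcal T_{\theta_i}:=\mathcal E_{\theta_i}-\sigma^{-1}\mathcal P_i-\mathcal A_i\mathcal A_i^*$. $\mathcal T_f$ is a self-adjoint positive semidefinite operator on $\mathcal U$. Notation: $y_{\le i}=(y_1,\dots,y_i)$, $y_{\ge i}=(y_i,\dots,y_p)$ (empty if out of range); $\|w\|^2_{\mathcal T}=\langle w,\mathcal Tw\rangle$. Let $\mathcal F_1:=\mathcal F$ and, for $i=1,\dots,p$, $\mathcal F_{i+1}:\mathcal X\to\mathcal U\times\mathcal Y_1\times\dots\times\mathcal Y_i$, $\mathcal F_{i+1}x=(\mathcal Fx,\mathcal A_1x,\dots,\mathcal A_ix)$. Define $\widehat{\mathcal T}_{f_1}:=\mathcal T_f+\mathcal F_1\mathcal A_1^*\mathcal E_{\theta_1}^{-1}\mathcal A_1\mathcal F_1^*$ and for $i=2,\dots,p$, $\widehat{\mathcal T}_{f_i}:=\mathrm{diag}(\widehat{\mathcal T}_{f_{i-1}},\mathcal T_{\theta_{i-1}})+\mathcal F_i\mathcal A_i^*\mathcal E_{\theta_i}^{-1}\mathcal A_i\mathcal F_i^*$ (an operator on $\mathcal U\times\mathcal Y_1\times\dots\times\mathcal Y_{i-1}$). *)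

theory Defs
  imports "HOL-Analysis.Analysis" "HOL-Library.FuncSet"
begin

text \<open>
  Each block space Y_i (i = 1..p)
  is modelled as a linear subspace  pd_SY D i  of a common Euclidean type 'y (with the
  inherited inner product), and likewise Z_j = pd_SZ D j, a subspace of a Euclidean
  type 'z.  An element y of Y = Y_1 x ... x Y_p is a family ys in PiE {1..p} (pd_SY D).
  Operators on Y_i are maps 'y => 'y that are linear and map Y_i into Y_i; their
  properties (self-adjointness, (semi)definiteness) are required on Y_i.
  A_i^* is the adjoint of A_i : X -> Y_i (restricted to Y_i).
\<close>

record ('u, 'v, 'x, 'y, 'z) prob_data =
  pd_sigma :: real
  pd_f :: "'u \<Rightarrow> ereal"
  pd_g :: "'v \<Rightarrow> ereal"
  pd_F :: "'x \<Rightarrow> 'u"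
  pd_G :: "'x \<Rightarrow> 'v"
  pd_p :: nat
  pd_q :: nat
  pd_SY :: "nat \<Rightarrow> 'y set"
  pd_SZ :: "nat \<Rightarrow> 'z set"
  pd_A :: "nat \<Rightarrow> 'x \<Rightarrow> 'y"
  pd_B :: "nat \<Rightarrow> 'x \<Rightarrow> 'z"
  pd_c :: 'x
  pd_P :: "nat \<Rightarrow> 'y \<Rightarrow> 'y"
  pd_b :: "nat \<Rightarrow> 'y"
  pd_Q :: "nat \<Rightarrow> 'z \<Rightarrow> 'z"
  pd_d :: "nat \<Rightarrow> 'z"
  pd_E :: "nat \<Rightarrow> 'y \<Rightarrow> 'y"
  pd_Tf :: "'u \<Rightarrow> 'u"

definition proper_fun :: "('a \<Rightarrow> ereal) \<Rightarrow> bool" where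
  "proper_fun h \<longleftrightarrow> (\<forall>x. h x \<noteq> -\<infinity>) \<and> (\<exists>x. h x \<noteq> \<infinity>)"

definition convex_fun :: "('a::real_vector \<Rightarrow> ereal) \<Rightarrow> bool" where
  "convex_fun h \<longleftrightarrow> (\<forall>x y. \<forall>t::real. 0 < t \<and> t < 1 \<longrightarrow>
      h ((1 - t) *\<^sub>R x + t *\<^sub>R y) \<le> ereal (1 - t) * h x + ereal t * h y)"

definition closed_fun :: "('a::topological_space \<Rightarrow> ereal) \<Rightarrow> bool" where
  "closed_fun h \<longleftrightarrow> closed {(x, t::real). h x \<le> ereal t}"

definition closed_proper_convex :: "('a::euclidean_space \<Rightarrow> ereal) \<Rightarrow> bool" where
  "closed_proper_convex h \<longleftrightarrow> closed_fun h \<and> proper_fun h \<and> convex_fun h"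

definition op_on :: "'a::euclidean_space set \<Rightarrow> ('a \<Rightarrow> 'a) \<Rightarrow> bool" where
  "op_on S T \<longleftrightarrow> linear T \<and> (\<forall>y\<in>S. T y \<in> S)"

definition selfadj_on :: "'a::euclidean_space set \<Rightarrow> ('a \<Rightarrow> 'a) \<Rightarrow> bool" where
  "selfadj_on S T \<longleftrightarrow> (\<forall>a\<in>S. \<forall>b\<in>S. a \<bullet> T b = T a \<bullet> b)"

definition psd_on :: "'a::euclidean_space set \<Rightarrow> ('a \<Rightarrow> 'a) \<Rightarrow> bool" where
  "psd_on S T \<longleftrightarrow> (\<forall>a\<in>S. 0 \<le> a \<bullet> T a)"

definition pd_on :: "'a::euclidean_space set \<Rightarrow> ('a \<Rightarrow> 'a) \<Rightarrow> bool" where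
  "pd_on S T \<longleftrightarrow> (\<forall>a\<in>S. a \<noteq> 0 \<longrightarrow> 0 < a \<bullet> T a)"

definition inv_on :: "'a::euclidean_space set \<Rightarrow> ('a \<Rightarrow> 'a) \<Rightarrow> 'a \<Rightarrow> 'a" where
  "inv_on S T w = (THE v. v \<in> S \<and> T v = w)"

definition sqn :: "('a::real_inner \<Rightarrow> 'a) \<Rightarrow> 'a \<Rightarrow> real" where
  "sqn T w = w \<bullet> T w"

definition wf_data :: "('u::euclidean_space, 'v::euclidean_space, 'x::euclidean_space,
      'y::euclidean_space, 'z::euclidean_space) prob_data \<Rightarrow> bool" where
  "wf_data D \<longleftrightarrow>
     1 \<le> pd_p D \<and> 1 \<le> pd_q D \<and> 0 < pd_sigma D \<and>
     closed_proper_convex (pd_f D) \<and> closed_proper_convex (pd_g D) \<and>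
     linear (pd_F D) \<and> linear (pd_G D) \<and>
     (\<forall>i\<in>{1..pd_p D}.
        subspace (pd_SY D i) \<and> linear (pd_A D i) \<and> (\<forall>x. pd_A D i x \<in> pd_SY D i) \<and>
        op_on (pd_SY D i) (pd_P D i) \<and> selfadj_on (pd_SY D i) (pd_P D i) \<and>
        psd_on (pd_SY D i) (pd_P D i) \<and> pd_b D i \<in> pd_SY D i \<and>
        op_on (pd_SY D i) (pd_E D i) \<and> selfadj_on (pd_SY D i) (pd_E D i) \<and>
        pd_on (pd_SY D i) (pd_E D i) \<and>
        (\<forall>y\<in>pd_SY D i. y \<bullet> pd_E D i y \<ge>
            (y \<bullet> pd_P D i y) / pd_sigma D + y \<bullet> pd_A D i (adjoint (pd_A D i) y))) \<and>
     (\<forall>j\<in>{1..pd_q D}.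
        subspace (pd_SZ D j) \<and> linear (pd_B D j) \<and> (\<forall>x. pd_B D j x \<in> pd_SZ D j) \<and>
        op_on (pd_SZ D j) (pd_Q D j) \<and> selfadj_on (pd_SZ D j) (pd_Q D j) \<and>
        psd_on (pd_SZ D j) (pd_Q D j) \<and> pd_d D j \<in> pd_SZ D j) \<and>
     linear (pd_Tf D) \<and> (\<forall>a b. a \<bullet> pd_Tf D b = pd_Tf D a \<bullet> b) \<and>
     (\<forall>a. 0 \<le> a \<bullet> pd_Tf D a)"

definition theta :: "('u, 'v, 'x, 'y::real_inner, 'z) prob_data \<Rightarrow> nat \<Rightarrow> 'y \<Rightarrow> real" where
  "theta D i y = (1/2) * (y \<bullet> pd_P D i y) - pd_b D i \<bullet> y"

definition phi :: "('u, 'v, 'x, 'y, 'z::real_inner) prob_data \<Rightarrow> nat \<Rightarrow> 'z \<Rightarrow> real" where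
  "phi D j z = (1/2) * (z \<bullet> pd_Q D j z) - pd_d D j \<bullet> z"

definition Gam :: "('u::euclidean_space, 'v::euclidean_space, 'x::euclidean_space,
      'y::euclidean_space, 'z::euclidean_space) prob_data
     \<Rightarrow> 'u \<Rightarrow> (nat \<Rightarrow> 'y) \<Rightarrow> 'v \<Rightarrow> (nat \<Rightarrow> 'z) \<Rightarrow> 'x" where
  "Gam D u ys v zs = adjoint (pd_F D) u + (\<Sum>i\<in>{1..pd_p D}. adjoint (pd_A D i) (ys i))
      + adjoint (pd_G D) v + (\<Sum>j\<in>{1..pd_q D}. adjoint (pd_B D j) (zs j)) - pd_c D"

definition Lsig :: "('u::euclidean_space, 'v::euclidean_space, 'x::euclidean_space,
      'y::euclidean_space, 'z::euclidean_space) prob_data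
     \<Rightarrow> 'u \<Rightarrow> (nat \<Rightarrow> 'y) \<Rightarrow> 'v \<Rightarrow> (nat \<Rightarrow> 'z) \<Rightarrow> 'x \<Rightarrow> ereal" where
  "Lsig D u ys v zs x = pd_f D u + pd_g D v +
     ereal ((\<Sum>i\<in>{1..pd_p D}. theta D i (ys i)) + (\<Sum>j\<in>{1..pd_q D}. phi D j (zs j))
        + x \<bullet> Gam D u ys v zs + (pd_sigma D / 2) * (norm (Gam D u ys v zs))\<^sup>2)"

definition Einv :: "('u, 'v, 'x, 'y::euclidean_space, 'z) prob_data \<Rightarrow> nat \<Rightarrow> 'y \<Rightarrow> 'y" where
  "Einv D i = inv_on (pd_SY D i) (pd_E D i)"

definition Ttheta :: "('u, 'v, 'x::euclidean_space, 'y::euclidean_space, 'z) prob_data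
     \<Rightarrow> nat \<Rightarrow> 'y \<Rightarrow> 'y" where
  "Ttheta D i y = pd_E D i y - (1 / pd_sigma D) *\<^sub>R pd_P D i y
      - pd_A D i (adjoint (pd_A D i) y)"

text \<open>Elements of U x Y_1 x ... x Y_(j-1) are pairs (u, ys) where only ys 1, ..., ys (j-1) matter.\<close>

definition Fcal :: "('u::euclidean_space, 'v, 'x::euclidean_space, 'y::euclidean_space, 'z) prob_data
     \<Rightarrow> nat \<Rightarrow> 'x \<Rightarrow> 'u \<times> (nat \<Rightarrow> 'y)" where
  "Fcal D j x = (pd_F D x, (\<lambda>k. if k \<in> {1..<j} then pd_A D k x else 0))"

definition Fcal_adj :: "('u::euclidean_space, 'v, 'x::euclidean_space, 'y::euclidean_space, 'z) prob_data
     \<Rightarrow> nat \<Rightarrow> 'u \<times> (nat \<Rightarrow> 'y) \<Rightarrow> 'x" where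
  "Fcal_adj D j w = adjoint (pd_F D) (fst w) + (\<Sum>k\<in>{1..<j}. adjoint (pd_A D k) (snd w k))"

definition ip_blk :: "('u::real_inner, 'v, 'x, 'y::real_inner, 'z) prob_data
     \<Rightarrow> nat \<Rightarrow> 'u \<times> (nat \<Rightarrow> 'y) \<Rightarrow> 'u \<times> (nat \<Rightarrow> 'y) \<Rightarrow> real" where
  "ip_blk D j w w' = fst w \<bullet> fst w' + (\<Sum>k\<in>{1..<j}. snd w k \<bullet> snd w' k)"

definition blk_add :: "'u::real_vector \<times> (nat \<Rightarrow> 'y::real_vector) \<Rightarrow> 'u \<times> (nat \<Rightarrow> 'y)
     \<Rightarrow> 'u \<times> (nat \<Rightarrow> 'y)" where
  "blk_add w w' = (fst w + fst w', (\<lambda>k. snd w k + snd w' k))"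

definition corr :: "('u::euclidean_space, 'v, 'x::euclidean_space, 'y::euclidean_space, 'z) prob_data
     \<Rightarrow> nat \<Rightarrow> 'u \<times> (nat \<Rightarrow> 'y) \<Rightarrow> 'u \<times> (nat \<Rightarrow> 'y)" where
  "corr D j w = Fcal D j (adjoint (pd_A D j) (Einv D j (pd_A D j (Fcal_adj D j w))))"

text \<open>hat T_(f_i); the diagonal block diag(hat T_(f_(i-1)), T_theta_(i-1)) acts on
  (u, ys) by applying hat T_(f_(i-1)) to (u, ys 1, ..., ys (i-2)) and T_theta_(i-1) to ys (i-1).\<close>
fun That :: "('u::euclidean_space, 'v, 'x::euclidean_space, 'y::euclidean_space, 'z) prob_data
     \<Rightarrow> nat \<Rightarrow> 'u \<times> (nat \<Rightarrow> 'y) \<Rightarrow> 'u \<times> (nat \<Rightarrow> 'y)" where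
  "That D 0 w = w"
| "That D (Suc 0) w = blk_add (pd_Tf D (fst w), (\<lambda>k. 0)) (corr D 1 w)"
| "That D (Suc (Suc i)) w =
     blk_add (fst (That D (Suc i) w),
              (snd (That D (Suc i) w))(Suc i := Ttheta D (Suc i) (snd w (Suc i))))
             (corr D (Suc (Suc i)) w)"

text \<open>The table beta_tab D ... n contains, for k = p-n+1, ..., p, the vector
  w_k = A_k^* E_theta_k^-1 (...) in X, so that beta_(k,j) = A_(j-1) w_k (A_0 = F).\<close>

definition Aop :: "('u, 'v, 'x, 'y, 'z) prob_data \<Rightarrow> nat \<Rightarrow> 'x \<Rightarrow> 'u + 'y" where
  "Aop D j x = (if j = 0 then Inl (pd_F D x) else Inr (pd_A D j x))"

primrec wtab :: "('u::euclidean_space, 'v::euclidean_space, 'x::euclidean_space,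
      'y::euclidean_space, 'z::euclidean_space) prob_data
     \<Rightarrow> (nat \<Rightarrow> 'y) \<Rightarrow> 'x \<Rightarrow> 'x \<Rightarrow> nat \<Rightarrow> nat \<Rightarrow> 'x" where
  "wtab D ybar xbar gbar 0 = (\<lambda>k. 0)"
| "wtab D ybar xbar gbar (Suc n) =
     (let i = pd_p D - n; prev = wtab D ybar xbar gbar n in
      prev(i := adjoint (pd_A D i) (Einv D i
         (pd_b D i - (\<Sum>k\<in>{i+1..pd_p D}. pd_A D i (prev k)) - pd_A D i xbar
          - pd_P D i (ybar i) + pd_sigma D *\<^sub>R pd_A D i gbar))))"

text \<open>beta D ubar ybar vbar zbar xbar i j = beta_(i,j), an element of U (as Inl) for j = 1
  and of Y_(j-1) (as Inr) for j >= 2.\<close>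
definition beta :: "('u::euclidean_space, 'v::euclidean_space, 'x::euclidean_space,
      'y::euclidean_space, 'z::euclidean_space) prob_data
     \<Rightarrow> 'u \<Rightarrow> (nat \<Rightarrow> 'y) \<Rightarrow> 'v \<Rightarrow> (nat \<Rightarrow> 'z) \<Rightarrow> 'x \<Rightarrow> nat \<Rightarrow> nat \<Rightarrow> 'u + 'y" where
  "beta D ubar ybar vbar zbar xbar i j =
     Aop D (j - 1) (wtab D ybar xbar (- Gam D ubar ybar vbar zbar) (pd_p D) i)"

definition delta_theta :: "('u::euclidean_space, 'v::euclidean_space, 'x::euclidean_space,
      'y::euclidean_space, 'z::euclidean_space) prob_data
     \<Rightarrow> 'u \<Rightarrow> (nat \<Rightarrow> 'y) \<Rightarrow> 'v \<Rightarrow> (nat \<Rightarrow> 'z) \<Rightarrow> 'x \<Rightarrow> 'u" where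
  "delta_theta D ubar ybar vbar zbar xbar =
     (\<Sum>i\<in>{1..pd_p D}. projl (beta D ubar ybar vbar zbar xbar i 1))"

definition mixY :: "(nat \<Rightarrow> 'y) \<Rightarrow> nat \<Rightarrow> 'y \<Rightarrow> (nat \<Rightarrow> 'y) \<Rightarrow> (nat \<Rightarrow> 'y)" where
  "mixY a i w b = (\<lambda>k. if k < i then a k else if k = i then w else b k)"

end

theory Submission
  imports Defs
begin



lemma surj_sub:
  fixes E :: "'a::euclidean_space \<Rightarrow> 'a"
  assumes "linear E" "subspace S" "\<And>y. y \<in> S \<Longrightarrow> E y \<in> S" "inj_on E S"
  shows "E ` S = S"
proof (rule subspace_dim_equal)
  show "subspace (E ` S)" using assms by (simp add: linear_subspace_image)
  show "E ` S \<subseteq> S" using assms by auto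
  show "subspace S" by fact
  have "dim (E ` S) = dim S"
    using assms by (metis dim_image_eq span_eq_iff)
  then show "dim S \<le> dim (E ` S)" by simp
qed

lemma alg1:
  fixes s :: real
  assumes "s \<noteq> 0"
  shows "Th + (1/2 * wPw - bw) + Ph + (xR + Axw) + s/2 * (nR + 2 * ARw + AAw)
        + s/2 * (wTw - 2 * Tyw + yTy)
      = Th + Ph + xR + s/2 * nR + s/2 * yTy + s/2 * (wTw + (1/s) * wPw + AAw)
        - s * ((1/s) * (bw - Axw) - ARw + Tyw)"
  using assms by (simp add: field_simps)

locale sgs =
  fixes D :: "('u::euclidean_space, 'v::euclidean_space, 'x::euclidean_space,
               'y::euclidean_space, 'z::euclidean_space) prob_data"
    and ubar :: 'u and ybar :: "nat \<Rightarrow> 'y" and vbar :: 'v and zbar :: "nat \<Rightarrow> 'z"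
    and xbar :: 'x and yp :: "nat \<Rightarrow> 'y"
  assumes wf: "wf_data D"
    and ybar: "ybar \<in> PiE {1..pd_p D} (pd_SY D)"
    and yp: "yp \<in> PiE {1..pd_p D} (pd_SY D)"
begin

abbreviation "sig \<equiv> pd_sigma D"
abbreviation "pp \<equiv> pd_p D"

lemma sig_pos: "0 < sig" using wf by (simp add: wf_data_def)
lemma p_pos: "1 \<le> pp" using wf by (simp add: wf_data_def)
lemma linF: "linear (pd_F D)" using wf by (simp add: wf_data_def)
lemma linTf: "linear (pd_Tf D)" using wf by (simp add: wf_data_def)
lemma Tf_psd: "0 \<le> a \<bullet> pd_Tf D a" using wf unfolding wf_data_def by blast
lemma f_proper: "proper_fun (pd_f D)" using wf by (simp add: wf_data_def closed_proper_convex_def)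
lemma g_proper: "proper_fun (pd_g D)" using wf by (simp add: wf_data_def closed_proper_convex_def)

context
  fixes i assumes i: "i \<in> {1..pp}"
begin
lemma blk:
  "subspace (pd_SY D i)" "linear (pd_A D i)" "\<And>x. pd_A D i x \<in> pd_SY D i"
  "linear (pd_P D i)" "\<And>y. y \<in> pd_SY D i \<Longrightarrow> pd_P D i y \<in> pd_SY D i"
  "\<And>a b. a \<in> pd_SY D i \<Longrightarrow> b \<in> pd_SY D i \<Longrightarrow> a \<bullet> pd_P D i b = pd_P D i a \<bullet> b"
  "pd_b D i \<in> pd_SY D i"
  "linear (pd_E D i)" "\<And>y. y \<in> pd_SY D i \<Longrightarrow> pd_E D i y \<in> pd_SY D i"
  "\<And>a b. a \<in> pd_SY D i \<Longrightarrow> b \<in> pd_SY D i \<Longrightarrow> a \<bullet> pd_E D i b = pd_E D i a \<bullet> b"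
  "\<And>a. a \<in> pd_SY D i \<Longrightarrow> a \<noteq> 0 \<Longrightarrow> 0 < a \<bullet> pd_E D i a"
  using wf i unfolding wf_data_def op_on_def selfadj_on_def pd_on_def by blast+

lemma E_psd: "a \<in> pd_SY D i \<Longrightarrow> 0 \<le> a \<bullet> pd_E D i a"
  using blk(11)[of a] by (cases "a = 0") auto

lemma linAadj: "linear (adjoint (pd_A D i))" by (rule adjoint_linear[OF blk(2)])

lemma linT: "linear (Ttheta D i)"
  by (rule linearI) (simp_all add: Ttheta_def linear_add[OF blk(8)] linear_add[OF blk(4)]
      linear_add[OF linAadj] linear_add[OF blk(2)] linear_scale[OF blk(8)] linear_scale[OF blk(4)]
      linear_scale[OF linAadj] linear_scale[OF blk(2)] algebra_simps)

lemma T_in: "y \<in> pd_SY D i \<Longrightarrow> Ttheta D i y \<in> pd_SY D i"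
  unfolding Ttheta_def using blk by (intro subspace_diff subspace_scale) auto

lemma E_eq: "pd_E D i y = Ttheta D i y + (1/sig) *\<^sub>R pd_P D i y + pd_A D i (adjoint (pd_A D i) y)"
  by (simp add: Ttheta_def)

lemma AAsym: "a \<bullet> pd_A D i (adjoint (pd_A D i) b) = pd_A D i (adjoint (pd_A D i) a) \<bullet> b"
  by (metis adjoint_clauses(1) blk(2) inner_commute)

lemma T_sym: "a \<in> pd_SY D i \<Longrightarrow> b \<in> pd_SY D i \<Longrightarrow> a \<bullet> Ttheta D i b = Ttheta D i a \<bullet> b"
  unfolding Ttheta_def using blk(6,10) AAsym by (simp add: inner_diff_right inner_diff_left)

lemma E_inj: "a \<in> pd_SY D i \<Longrightarrow> b \<in> pd_SY D i \<Longrightarrow> pd_E D i a = pd_E D i b \<Longrightarrow> a = b"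
proof (rule ccontr)
  assume a: "a \<in> pd_SY D i" "b \<in> pd_SY D i" "pd_E D i a = pd_E D i b" "a \<noteq> b"
  have "a - b \<in> pd_SY D i" using a blk(1) by (simp add: subspace_diff)
  moreover have "pd_E D i (a - b) = 0" using a blk(8) by (simp add: linear_diff)
  ultimately show False using blk(11)[of "a - b"] a by simp
qed

lemma Einv_unique: "v \<in> pd_SY D i \<Longrightarrow> pd_E D i v = w \<Longrightarrow> Einv D i w = v"
  unfolding Einv_def inv_on_def using E_inj by blast

lemma Einv_works: assumes "w \<in> pd_SY D i"
  shows "Einv D i w \<in> pd_SY D i" "pd_E D i (Einv D i w) = w"
proof -
  have "pd_E D i ` pd_SY D i = pd_SY D i"
    by (rule surj_sub) (use blk E_inj in \<open>auto simp: inj_on_def\<close>)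
  then obtain v where "v \<in> pd_SY D i" "pd_E D i v = w" using assms by force
  then show "Einv D i w \<in> pd_SY D i" "pd_E D i (Einv D i w) = w"
    using Einv_unique by auto
qed
end


end


context sgs begin
lemma ybar_in: "i \<in> {1..pp} \<Longrightarrow> ybar i \<in> pd_SY D i" using ybar by auto
lemma yp_in: "i \<in> {1..pp} \<Longrightarrow> yp i \<in> pd_SY D i" using yp by auto

definition "c0 = adjoint (pd_G D) vbar + (\<Sum>j\<in>{1..pd_q D}. adjoint (pd_B D j) (zbar j)) - pd_c D"
definition "AY ys = (\<Sum>i\<in>{1..pp}. adjoint (pd_A D i) (ys i))"

lemma Gam_eq: "Gam D u ys vbar zbar = adjoint (pd_F D) u + AY ys + c0"
  by (simp add: Gam_def c0_def AY_def algebra_simps)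

definition RL where "RL u ys = (\<Sum>i\<in>{1..pp}. theta D i (ys i)) + (\<Sum>j\<in>{1..pd_q D}. phi D j (zbar j))
   + xbar \<bullet> Gam D u ys vbar zbar + sig/2 * (norm (Gam D u ys vbar zbar))\<^sup>2"

lemma Lsig_eq: "Lsig D u ys vbar zbar xbar = pd_f D u + pd_g D vbar + ereal (RL u ys)"
  by (simp add: Lsig_def RL_def)

lemma Gam_cong: "(\<forall>k\<in>{1..pp}. a k = b k) \<Longrightarrow> Gam D u a vbar zbar = Gam D u b vbar zbar"
proof -
  assume h: "\<forall>k\<in>{1..pp}. a k = b k"
  have "(\<Sum>i\<in>{1..pp}. adjoint (pd_A D i) (a i)) = (\<Sum>i\<in>{1..pp}. adjoint (pd_A D i) (b i))"
    using h by (intro sum.cong) auto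
  then show ?thesis unfolding Gam_def by simp
qed

lemma RL_cong: "(\<forall>k\<in>{1..pp}. a k = b k) \<Longrightarrow> RL u a = RL u b"
proof -
  assume h: "\<forall>k\<in>{1..pp}. a k = b k"
  have "(\<Sum>i\<in>{1..pp}. theta D i (a i)) = (\<Sum>i\<in>{1..pp}. theta D i (b i))"
    using h by (intro sum.cong) auto
  then show ?thesis unfolding RL_def using Gam_cong[OF h, of u] by simp
qed

lemma sum_mix:
  fixes h :: "nat \<Rightarrow> 'y \<Rightarrow> 'a::ab_group_add"
  assumes "i \<in> {1..pp}"
  shows "(\<Sum>k\<in>{1..pp}. h k (mixY y i w z k)) = (\<Sum>k\<in>{1..pp}. h k (mixY y i 0 z k)) + h i w - h i 0"
proof -
  have "(\<Sum>k\<in>{1..pp}. h k (mixY y i w z k)) = h i w + (\<Sum>k\<in>{1..pp}-{i}. h k (mixY y i w z k))"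
    using assms by (subst sum.remove[of _ i]) (auto simp: mixY_def)
  moreover have "(\<Sum>k\<in>{1..pp}. h k (mixY y i 0 z k)) = h i 0 + (\<Sum>k\<in>{1..pp}-{i}. h k (mixY y i 0 z k))"
    using assms by (subst sum.remove[of _ i]) (auto simp: mixY_def)
  moreover have "(\<Sum>k\<in>{1..pp}-{i}. h k (mixY y i w z k)) = (\<Sum>k\<in>{1..pp}-{i}. h k (mixY y i 0 z k))"
    by (rule sum.cong) (auto simp: mixY_def)
  ultimately show ?thesis by (simp add: algebra_simps)
qed

definition "Rc i u y = Gam D u (mixY y i 0 yp) vbar zbar"
definition "s i u y w = RL u (mixY y i w yp) + sig/2 * sqn (Ttheta D i) (w - ybar i)"
definition "ee i u y = (1/sig) *\<^sub>R (pd_b D i - pd_A D i xbar) - pd_A D i (Rc i u y) + Ttheta D i (ybar i)"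
definition "M i u y = Einv D i (ee i u y)"

context
  fixes i assumes i: "i \<in> {1..pp}"
begin

lemma Gam_mix: "Gam D u (mixY y i w yp) vbar zbar = Rc i u y + adjoint (pd_A D i) w"
  unfolding Rc_def Gam_eq AY_def
  using sum_mix[OF i, of "\<lambda>k v. adjoint (pd_A D k) v" y w yp] linear_0[OF linAadj[OF i]]
  by (simp add: algebra_simps)

lemma theta0: "theta D i 0 = 0"
  by (simp add: theta_def linear_0[OF blk(4)[OF i]])

lemma theta_mix: "(\<Sum>k\<in>{1..pp}. theta D k (mixY y i w yp k)) = (\<Sum>k\<in>{1..pp}. theta D k (mixY y i 0 yp k)) + theta D i w"
  using sum_mix[OF i, of "\<lambda>k v. theta D k v" y w yp] theta0 by simp

lemma ee_in: "ee i u y \<in> pd_SY D i"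
  unfolding ee_def using blk[OF i] T_in[OF i] ybar_in[OF i]
  by (intro subspace_add subspace_diff subspace_scale) auto

lemma M_in: "M i u y \<in> pd_SY D i" "pd_E D i (M i u y) = ee i u y"
  unfolding M_def using Einv_works[OF i ee_in] by auto

lemma s_quad:
  assumes w: "w \<in> pd_SY D i"
  shows "s i u y w = s i u y 0 + sig/2 * (w \<bullet> pd_E D i w) - sig * (ee i u y \<bullet> w)"
proof -
  let ?A = "pd_A D i" and ?At = "adjoint (pd_A D i)" and ?T = "Ttheta D i" and ?P = "pd_P D i"
  define R where "R = Rc i u y"
  define Th where "Th = (\<Sum>k\<in>{1..pp}. theta D k (mixY y i 0 yp k))"
  define Ph where "Ph = (\<Sum>j\<in>{1..pd_q D}. phi D j (zbar j))"
  have lA: "linear ?A" using blk(2)[OF i] .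
  have yb: "ybar i \<in> pd_SY D i" using ybar_in[OF i] .
  have s_w: "s i u y w = Th + theta D i w + Ph + xbar \<bullet> (R + ?At w) + sig/2 * (norm (R + ?At w))\<^sup>2
      + sig/2 * sqn ?T (w - ybar i)"
    unfolding s_def RL_def Gam_mix theta_mix[of y w] R_def Th_def Ph_def by simp
  have s_0: "s i u y 0 = Th + Ph + xbar \<bullet> R + sig/2 * (norm R)\<^sup>2 + sig/2 * sqn ?T (0 - ybar i)"
    unfolding s_def RL_def Gam_mix R_def Th_def Ph_def
    by (simp add: linear_0[OF linAadj[OF i]])
  have n1a: "(norm (R + ?At w))\<^sup>2 = (norm R)\<^sup>2 + 2 * (R \<bullet> ?At w) + ?At w \<bullet> ?At w"
    unfolding power2_norm_eq_inner inner_add_left inner_add_right inner_commute[of "?At w" R] by simp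
  have n1b: "R \<bullet> ?At w = ?A R \<bullet> w" by (rule adjoint_works[OF lA])
  have n1c: "?At w \<bullet> ?At w = ?A (?At w) \<bullet> w" by (rule adjoint_works[OF lA])
  have n1: "(norm (R + ?At w))\<^sup>2 = (norm R)\<^sup>2 + 2 * (?A R \<bullet> w) + ?A (?At w) \<bullet> w"
    using n1a n1b n1c by simp
  have n2: "xbar \<bullet> ?At w = ?A xbar \<bullet> w" by (rule adjoint_works[OF lA])
  have n3: "xbar \<bullet> (R + ?At w) = xbar \<bullet> R + ?A xbar \<bullet> w" unfolding inner_add_right n2 ..
  have Tsym: "ybar i \<bullet> ?T w = ?T (ybar i) \<bullet> w" using T_sym[OF i yb w] .
  have n4a: "?T (w - ybar i) = ?T w - ?T (ybar i)" by (rule linear_diff[OF linT[OF i]])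
  have n4b: "w \<bullet> ?T (ybar i) = ?T (ybar i) \<bullet> w" by (rule inner_commute)
  have n4: "sqn ?T (w - ybar i) = w \<bullet> ?T w - 2 * (?T (ybar i) \<bullet> w) + ybar i \<bullet> ?T (ybar i)"
    unfolding sqn_def n4a inner_diff_left inner_diff_right n4b Tsym by simp
  have n5: "sqn ?T (0 - ybar i) = ybar i \<bullet> ?T (ybar i)"
    unfolding sqn_def by (simp add: linear_neg[OF linT[OF i]])
  have n6a: "w \<bullet> ?A (?At w) = ?A (?At w) \<bullet> w" by (rule inner_commute)
  have n6: "w \<bullet> pd_E D i w = w \<bullet> ?T w + (1/sig) * (w \<bullet> ?P w) + ?A (?At w) \<bullet> w"
    unfolding E_eq[OF i] inner_add_right inner_scaleR_right n6a ..
  have n7a: "pd_b D i \<bullet> w = w \<bullet> pd_b D i" by (rule inner_commute)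
  have n7: "theta D i w = 1/2 * (w \<bullet> ?P w) - pd_b D i \<bullet> w"
    unfolding theta_def n7a ..
  have n8: "ee i u y \<bullet> w = (1/sig) * (pd_b D i \<bullet> w - ?A xbar \<bullet> w) - ?A R \<bullet> w + ?T (ybar i) \<bullet> w"
    unfolding ee_def R_def inner_add_left inner_diff_left inner_scaleR_left ..
  show ?thesis
    unfolding s_w s_0 n1 n3 n4 n5 n6 n7 n8 using sig_pos
    by (intro alg1) simp
qed

lemma s_sq:
  assumes w: "w \<in> pd_SY D i"
  shows "s i u y w = sig/2 * sqn (pd_E D i) (w - M i u y) + (s i u y 0 - sig/2 * (M i u y \<bullet> ee i u y))"
proof -
  have m: "M i u y \<in> pd_SY D i" "pd_E D i (M i u y) = ee i u y" using M_in by auto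
  have sy: "M i u y \<bullet> pd_E D i w = ee i u y \<bullet> w" using blk(10)[OF i m(1) w] m(2) by simp
  have h1: "sqn (pd_E D i) (w - M i u y) = w \<bullet> pd_E D i w - 2 * (ee i u y \<bullet> w) + M i u y \<bullet> ee i u y"
    unfolding sqn_def using sy m(2)
    by (simp add: linear_diff[OF blk(8)[OF i]] inner_diff_left inner_diff_right inner_commute)
  show ?thesis unfolding h1 s_quad[OF w, of u y] by (simp add: algebra_simps)
qed

end

lemma sum_if_less:
  assumes "i \<le> Suc pp"
  shows "(\<Sum>k\<in>{1..pp}. if k < i then f k else 0) = (\<Sum>k\<in>{1..<i}. f k)"
proof -
  have "(\<Sum>k\<in>{1..pp}. if k < i then f k else 0) = (\<Sum>k\<in>{1..pp} \<inter> {k. k < i}. f k)"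
    by (simp add: sum.inter_restrict)
  moreover have "{1..pp} \<inter> {k. k < i} = {1..<i}" using assms by auto
  ultimately show ?thesis by simp
qed

context
  fixes i assumes i: "i \<in> {1..pp}"
begin

lemma Rc_diff: "Rc i u y = Rc i ubar ybar + Fcal_adj D i (u - ubar, \<lambda>k. y k - ybar k)"
proof -
  have lF: "linear (adjoint (pd_F D))" by (rule adjoint_linear[OF linF])
  have "AY (mixY y i 0 yp) - AY (mixY ybar i 0 yp)
      = (\<Sum>k\<in>{1..pp}. adjoint (pd_A D k) (mixY y i 0 yp k) - adjoint (pd_A D k) (mixY ybar i 0 yp k))"
    unfolding AY_def by (simp add: sum_subtractf)
  also have "\<dots> = (\<Sum>k\<in>{1..pp}. if k < i then adjoint (pd_A D k) (y k - ybar k) else 0)"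
    by (rule sum.cong) (auto simp: mixY_def linear_diff[OF linAadj])
  also have "\<dots> = (\<Sum>k\<in>{1..<i}. adjoint (pd_A D k) (y k - ybar k))"
    using i by (intro sum_if_less) auto
  finally have "AY (mixY y i 0 yp) = AY (mixY ybar i 0 yp) + (\<Sum>k\<in>{1..<i}. adjoint (pd_A D k) (y k - ybar k))"
    by (simp add: algebra_simps)
  then show ?thesis
    unfolding Rc_def Gam_eq Fcal_adj_def by (simp add: linear_diff[OF lF] algebra_simps)
qed

lemma M_diff: "M i u y = M i ubar ybar - Einv D i (pd_A D i (Fcal_adj D i (u - ubar, \<lambda>k. y k - ybar k)))"
proof -
  define h where "h = Fcal_adj D i (u - ubar, \<lambda>k. y k - ybar k)"
  have ah: "pd_A D i h \<in> pd_SY D i" using blk(3)[OF i] .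
  have g: "Einv D i (pd_A D i h) \<in> pd_SY D i" "pd_E D i (Einv D i (pd_A D i h)) = pd_A D i h"
    using Einv_works[OF i ah] by auto
  have m: "M i ubar ybar \<in> pd_SY D i" "pd_E D i (M i ubar ybar) = ee i ubar ybar"
    using M_in[OF i] by auto
  have e: "ee i u y = ee i ubar ybar - pd_A D i h"
    unfolding ee_def Rc_diff[of u y] h_def by (simp add: linear_add[OF blk(2)[OF i]] algebra_simps)
  have in1: "M i ubar ybar - Einv D i (pd_A D i h) \<in> pd_SY D i"
    using m(1) g(1) by (rule subspace_diff[OF blk(1)[OF i]])
  have in2: "pd_E D i (M i ubar ybar - Einv D i (pd_A D i h)) = ee i u y"
    unfolding linear_diff[OF blk(8)[OF i]] m(2) g(2) e ..
  have "Einv D i (ee i u y) = M i ubar ybar - Einv D i (pd_A D i h)"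
    by (rule Einv_unique[OF i in1 in2])
  then show ?thesis unfolding M_def[of i u y] h_def .
qed

lemma M_cong: "(\<forall>k\<in>{1..<i}. a k = b k) \<Longrightarrow> M i u a = M i u b"
  unfolding M_def ee_def Rc_def
  by (subst Gam_cong[of "mixY a i 0 yp" "mixY b i 0 yp"]) (auto simp: mixY_def)

end
end



lemma ereal_add_less: "c \<noteq> \<infinity> \<Longrightarrow> c \<noteq> -\<infinity> \<Longrightarrow> a < b \<Longrightarrow> c + ereal a < c + ereal b"
  by (cases c) auto

lemma ereal_add_assoc2: "(c::ereal) + ereal a + ereal b = c + ereal (a + b)"
  by (cases c) auto

context sgs begin

lemma obj_eq: "Lsig D u (mixY y i w yp) vbar zbar xbar + ereal (sig/2 * sqn (Ttheta D i) (w - ybar i))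
   = pd_f D u + pd_g D vbar + ereal (s i u y w)"
  by (simp add: Lsig_eq s_def ereal_add_assoc2)

context fixes i assumes i: "i \<in> {1..pp}"
begin
lemma sqnE_nonneg: "v \<in> pd_SY D i \<Longrightarrow> 0 \<le> sqn (pd_E D i) v"
  unfolding sqn_def by (rule E_psd[OF i])
lemma sqnE_pos: "v \<in> pd_SY D i \<Longrightarrow> v \<noteq> 0 \<Longrightarrow> 0 < sqn (pd_E D i) v"
  unfolding sqn_def by (rule blk(11)[OF i])

lemma s_min:
  assumes w: "w \<in> pd_SY D i" and ne: "w \<noteq> M i u y"
  shows "s i u y (M i u y) < s i u y w"
proof -
  have "w - M i u y \<in> pd_SY D i" using w M_in[OF i] by (simp add: subspace_diff[OF blk(1)[OF i]])
  then have "0 < sqn (pd_E D i) (w - M i u y)" using ne by (intro sqnE_pos) auto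
  then show ?thesis
    using s_sq[OF i w, of u y] s_sq[OF i M_in(1)[OF i], of u y] sig_pos
    by (simp add: sqn_def linear_0[OF blk(8)[OF i]])
qed
end

definition "Dl u y = (u - ubar, \<lambda>k. y k - ybar k)"

definition "q j u y = (if j = 0 then RL u yp + sig/2 * sqn (pd_Tf D) (u - ubar)
    else s j u y (y j) + sig/2 * ip_blk D j (Dl u y) (That D j (Dl u y)))"

lemma ip_blk_add: "ip_blk D j w (blk_add a b) = ip_blk D j w a + ip_blk D j w b"
  unfolding ip_blk_def blk_add_def by (simp add: inner_add_right sum.distrib)

lemma ip_upd: "ip_blk D (Suc (Suc i)) w (fst X, (snd X)(Suc i := t))
     = ip_blk D (Suc i) w X + snd w (Suc i) \<bullet> t"
proof -
  have e: "{1..<Suc (Suc i)} = insert (Suc i) {1..<Suc i}" by auto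
  have "(\<Sum>k\<in>{1..<Suc i}. snd w k \<bullet> ((snd X)(Suc i := t)) k) = (\<Sum>k\<in>{1..<Suc i}. snd w k \<bullet> snd X k)"
    by (rule sum.cong) auto
  then show ?thesis unfolding ip_blk_def e by (simp add: algebra_simps)
qed

lemma ip_That1: "ip_blk D (Suc 0) w (That D (Suc 0) w) = fst w \<bullet> pd_Tf D (fst w) + ip_blk D (Suc 0) w (corr D (Suc 0) w)"
  unfolding That.simps ip_blk_add by (simp add: ip_blk_def)

lemma ip_That2: "ip_blk D (Suc (Suc i)) w (That D (Suc (Suc i)) w)
   = ip_blk D (Suc i) w (That D (Suc i) w) + snd w (Suc i) \<bullet> Ttheta D (Suc i) (snd w (Suc i))
     + ip_blk D (Suc (Suc i)) w (corr D (Suc (Suc i)) w)"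
  unfolding That.simps(3) ip_blk_add ip_upd ..

lemma ip_Fcal:
  assumes "j \<le> pp"
  shows "ip_blk D j w (Fcal D j x) = Fcal_adj D j w \<bullet> x"
proof -
  have "(\<Sum>k\<in>{1..<j}. snd w k \<bullet> (if k \<in> {1..<j} then pd_A D k x else 0))
      = (\<Sum>k\<in>{1..<j}. adjoint (pd_A D k) (snd w k) \<bullet> x)"
  proof (rule sum.cong)
    fix k assume k: "k \<in> {1..<j}"
    then have "k \<in> {1..pp}" using assms by auto
    then show "snd w k \<bullet> (if k \<in> {1..<j} then pd_A D k x else 0) = adjoint (pd_A D k) (snd w k) \<bullet> x"
      using k adjoint_clauses(2)[OF blk(2)] by simp
  qed simp
  then show ?thesis
    unfolding ip_blk_def Fcal_def Fcal_adj_def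
    by (simp add: inner_add_left inner_sum_left adjoint_clauses(2)[OF linF])
qed

lemma ip_corr:
  assumes j: "j \<in> {1..pp}"
  shows "ip_blk D j w (corr D j w) = pd_A D j (Fcal_adj D j w) \<bullet> Einv D j (pd_A D j (Fcal_adj D j w))"
  unfolding corr_def using j by (simp add: ip_Fcal adjoint_works[OF blk(2)[OF j]])

end

lemma (in sgs) qprev:
  assumes j: "j \<in> {1..pp}"
  shows "q (j - 1) u y = RL u (mixY y j (yp j) yp)
     + sig/2 * (ip_blk D j (Dl u y) (That D j (Dl u y)) - ip_blk D j (Dl u y) (corr D j (Dl u y)))"
proof (cases j)
  case 0 then show ?thesis using j by simp
next
  case (Suc j')
  show ?thesis
  proof (cases j')
    case 0
    have "RL u yp = RL u (mixY y j (yp j) yp)"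
      by (rule RL_cong) (auto simp: mixY_def Suc 0)
    then show ?thesis
      unfolding Suc 0 q_def using ip_That1[of "Dl u y"]
      by (simp add: Dl_def sqn_def)
  next
    case (Suc i')
    have mx: "mixY y (Suc i') (y (Suc i')) yp = mixY y j (yp j) yp"
      by (rule ext) (auto simp: mixY_def \<open>j = Suc j'\<close> Suc less_Suc_eq)
    have e1: "q (Suc i') u y = RL u (mixY y (Suc i') (y (Suc i')) yp)
        + sig/2 * sqn (Ttheta D (Suc i')) (y (Suc i') - ybar (Suc i'))
        + sig/2 * ip_blk D (Suc i') (Dl u y) (That D (Suc i') (Dl u y))"
      by (simp add: q_def s_def del: That.simps)
    have sD: "snd (Dl u y) (Suc i') = y (Suc i') - ybar (Suc i')" by (simp add: Dl_def)
    have e2: "ip_blk D (Suc (Suc i')) (Dl u y) (That D (Suc (Suc i')) (Dl u y))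
       = ip_blk D (Suc i') (Dl u y) (That D (Suc i') (Dl u y)) + sqn (Ttheta D (Suc i')) (y (Suc i') - ybar (Suc i'))
         + ip_blk D (Suc (Suc i')) (Dl u y) (corr D (Suc (Suc i')) (Dl u y))"
      using ip_That2[of i' "Dl u y"] unfolding sD sqn_def .
    have jj: "j - 1 = Suc i'" "j = Suc (Suc i')" using \<open>j = Suc j'\<close> Suc by auto
    show ?thesis
      unfolding jj e2 by (simp add: e1 mx[unfolded jj] algebra_simps del: That.simps)
  qed
qed

locale sgs2 = sgs +
  assumes g_fin: "pd_g D vbar \<noteq> \<infinity>" and ubar_dom: "pd_f D ubar \<noteq> \<infinity>"
    and yp_min: "\<forall>i\<in>{1..pd_p D}.
       is_arg_min (\<lambda>w. Lsig D ubar (mixY ybar i w yp) vbar zbar xbar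
                        + ereal (pd_sigma D / 2 * sqn (Ttheta D i) (w - ybar i)))
                  (\<lambda>w. w \<in> pd_SY D i) (yp i)"
begin

lemma g_ninf: "pd_g D vbar \<noteq> -\<infinity>" using g_proper by (simp add: proper_fun_def)
lemma f_ninf: "pd_f D u \<noteq> -\<infinity>" using f_proper by (simp add: proper_fun_def)

lemma fg_fin: "pd_f D u \<noteq> \<infinity> \<Longrightarrow> pd_f D u + pd_g D vbar \<noteq> \<infinity> \<and> pd_f D u + pd_g D vbar \<noteq> -\<infinity>"
  using g_fin g_ninf f_ninf[of u] by (cases "pd_f D u"; cases "pd_g D vbar") auto

lemma yp_M:
  assumes i: "i \<in> {1..pp}"
  shows "yp i = M i ubar ybar"
proof (rule ccontr)
  assume ne: "yp i \<noteq> M i ubar ybar"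
  have lt: "s i ubar ybar (M i ubar ybar) < s i ubar ybar (yp i)"
    using s_min[OF i yp_in[OF i] ne] .
  have "pd_f D ubar + pd_g D vbar + ereal (s i ubar ybar (M i ubar ybar))
      < pd_f D ubar + pd_g D vbar + ereal (s i ubar ybar (yp i))"
    using fg_fin[OF ubar_dom] lt by (intro ereal_add_less) auto
  then show False using yp_min i M_in(1)[OF i, of ubar ybar]
    unfolding is_arg_min_def obj_eq by blast
qed

lemma q_step:
  assumes j: "j \<in> {1..pp}" and yj: "y j \<in> pd_SY D j"
  shows "q j u y = q (j - 1) u y + sig/2 * sqn (pd_E D j) (y j - M j u y)
            + sig/2 * sqn (Ttheta D j) (yp j - ybar j)"
proof -
  define h where "h = Fcal_adj D j (Dl u y)"
  define a where "a = pd_A D j h"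
  define g where "g = Einv D j a"
  have ain: "a \<in> pd_SY D j" unfolding a_def using blk(3)[OF j] .
  have gE: "pd_E D j g = a" unfolding g_def using Einv_works[OF j ain] by simp
  have Mj: "M j u y = yp j - g"
    using M_diff[OF j, of u y] yp_M[OF j] unfolding g_def a_def h_def Dl_def by simp
  have d: "yp j - M j u y = g" unfolding Mj by simp
  have sE: "s j u y (yp j) = sig/2 * (g \<bullet> a) + (s j u y 0 - sig/2 * (M j u y \<bullet> ee j u y))"
    using s_sq[OF j yp_in[OF j], of u y] unfolding d sqn_def gE .
  have sY: "s j u y (y j) = sig/2 * sqn (pd_E D j) (y j - M j u y) + (s j u y 0 - sig/2 * (M j u y \<bullet> ee j u y))"
    using s_sq[OF j yj] .
  have qj: "q j u y = s j u y (y j) + sig/2 * ip_blk D j (Dl u y) (That D j (Dl u y))"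
    using j by (simp add: q_def)
  have ipc: "ip_blk D j (Dl u y) (corr D j (Dl u y)) = g \<bullet> a"
    using ip_corr[OF j] unfolding g_def a_def h_def by (simp add: inner_commute)
  have RLe: "RL u (mixY y j (yp j) yp) = s j u y (yp j) - sig/2 * sqn (Ttheta D j) (yp j - ybar j)"
    by (simp add: s_def mixY_def)
  show ?thesis
    unfolding qj qprev[OF j] RLe ipc sE sY by (simp add: algebra_simps)
qed

lemma q_sum:
  assumes y: "\<forall>k\<in>{1..pp}. y k \<in> pd_SY D k"
  shows "j \<le> pp \<Longrightarrow> q j u y = q 0 u y + (\<Sum>k\<in>{1..j}. sig/2 * sqn (pd_E D k) (y k - M k u y)
            + sig/2 * sqn (Ttheta D k) (yp k - ybar k))"
proof (induction j)
  case 0 then show ?case by simp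
next
  case (Suc j)
  have j: "Suc j \<in> {1..pp}" using Suc.prems by auto
  show ?case
    using q_step[OF j, of y u] y j Suc.IH Suc.prems by (simp add: sum.cl_ivl_Suc)
qed

end



context sgs2 begin

primrec ystep where
  "ystep u 0 = (\<lambda>k. 0)"
| "ystep u (Suc n) = (ystep u n)(Suc n := M (Suc n) u (ystep u n))"

definition "yst u = restrict (ystep u pp) {1..pp}"

lemma ystep_stable: "n \<le> m \<Longrightarrow> k \<le> n \<Longrightarrow> ystep u m k = ystep u n k"
proof (induction m rule: dec_induct)
  case base then show ?case by simp
next
  case (step m) then show ?case by simp
qed

lemma yst_k: "k \<in> {1..pp} \<Longrightarrow> yst u k = M k u (ystep u (k - 1))"
proof -
  assume k: "k \<in> {1..pp}"
  then have "yst u k = ystep u k k" using ystep_stable[of k pp k u] by (simp add: yst_def)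
  also have "\<dots> = M k u (ystep u (k - 1))" using k by (cases k) auto
  finally show ?thesis .
qed

lemma yst_in: "yst u \<in> PiE {1..pp} (pd_SY D)"
  unfolding PiE_def Pi_def using yst_k M_in(1) by (auto simp: yst_def)

lemma yst_fix: "k \<in> {1..pp} \<Longrightarrow> yst u k = M k u (yst u)"
proof -
  assume k: "k \<in> {1..pp}"
  have "M k u (ystep u (k - 1)) = M k u (yst u)"
  proof (rule M_cong[OF k], intro ballI)
    fix l assume l: "l \<in> {1..<k}"
    then show "ystep u (k - 1) l = yst u l"
      using k ystep_stable[of "k - 1" pp l u] by (auto simp: yst_def)
  qed
  then show ?thesis using yst_k[OF k] by simp
qed

definition "Cs = (\<Sum>k\<in>{1..pp}. sig/2 * sqn (Ttheta D k) (yp k - ybar k))"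
definition "q0 u = RL u yp + sig/2 * sqn (pd_Tf D) (u - ubar)"

lemma PiE_in: "ys \<in> PiE {1..pp} (pd_SY D) \<Longrightarrow> \<forall>k\<in>{1..pp}. ys k \<in> pd_SY D k" by auto

lemma q_full: "ys \<in> PiE {1..pp} (pd_SY D) \<Longrightarrow>
   q pp u ys = q0 u + Cs + (\<Sum>k\<in>{1..pp}. sig/2 * sqn (pd_E D k) (ys k - M k u ys))"
  using q_sum[OF PiE_in, of ys pp u] by (simp add: q_def q0_def Cs_def sum.distrib)

lemma q_ge: "ys \<in> PiE {1..pp} (pd_SY D) \<Longrightarrow> q0 u + Cs \<le> q pp u ys"
proof -
  assume ys: "ys \<in> PiE {1..pp} (pd_SY D)"
  have "0 \<le> (\<Sum>k\<in>{1..pp}. sig/2 * sqn (pd_E D k) (ys k - M k u ys))"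
  proof (rule sum_nonneg)
    fix k assume k: "k \<in> {1..pp}"
    have "ys k - M k u ys \<in> pd_SY D k"
      using subspace_diff[OF blk(1)[OF k] _ M_in(1)[OF k], of "ys k"] ys k by (auto simp: PiE_iff)
    then show "0 \<le> sig/2 * sqn (pd_E D k) (ys k - M k u ys)"
      using sqnE_nonneg[OF k] sig_pos by simp
  qed
  then show ?thesis using q_full[OF ys] by simp
qed

lemma q_yst: "q pp u (yst u) = q0 u + Cs"
  using q_full[OF yst_in, of u] yst_fix[of _ u] by (simp add: sqn_def linear_0[OF blk(8)])

lemma q_eq_M: assumes ys: "ys \<in> PiE {1..pp} (pd_SY D)" and eq: "q pp u ys \<le> q0 u + Cs"
  and k: "k \<in> {1..pp}"
  shows "ys k = M k u ys"
proof (rule ccontr)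
  assume ne: "ys k \<noteq> M k u ys"
  have nn: "\<And>l. l \<in> {1..pp} \<Longrightarrow> 0 \<le> sig/2 * sqn (pd_E D l) (ys l - M l u ys)"
  proof -
    fix l assume l: "l \<in> {1..pp}"
    have "ys l - M l u ys \<in> pd_SY D l"
      using subspace_diff[OF blk(1)[OF l] _ M_in(1)[OF l], of "ys l"] ys l by (auto simp: PiE_iff)
    then show "0 \<le> sig/2 * sqn (pd_E D l) (ys l - M l u ys)"
      using sqnE_nonneg[OF l] sig_pos by simp
  qed
  have "ys k - M k u ys \<in> pd_SY D k"
      using subspace_diff[OF blk(1)[OF k] _ M_in(1)[OF k], of "ys k"] ys k by (auto simp: PiE_iff)
  then have pos: "0 < sig/2 * sqn (pd_E D k) (ys k - M k u ys)"
    using sqnE_pos[OF k] ne sig_pos by simp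
  have "sig/2 * sqn (pd_E D k) (ys k - M k u ys) \<le> (\<Sum>l\<in>{1..pp}. sig/2 * sqn (pd_E D l) (ys l - M l u ys))"
    using k nn by (intro member_le_sum) auto
  then show False using q_full[OF ys] eq pos by simp
qed

lemma J_eq: "ys \<in> PiE {1..pp} (pd_SY D) \<Longrightarrow>
   Lsig D u ys vbar zbar xbar + ereal (sig / 2 * ip_blk D pp (u - ubar, (\<lambda>k. ys k - ybar k))
                      (That D pp (u - ubar, (\<lambda>k. ys k - ybar k)))
                 + sig / 2 * sqn (Ttheta D pp) (ys pp - ybar pp))
   = pd_f D u + pd_g D vbar + ereal (q pp u ys)"
proof -
  have "RL u (mixY ys pp (ys pp) yp) = RL u ys" by (rule RL_cong) (auto simp: mixY_def)
  moreover have "pp \<noteq> 0" using p_pos by simp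
  ultimately show ?thesis by (simp add: q_def s_def Dl_def Lsig_eq ereal_add_assoc2 algebra_simps del: That.simps)
qed

lemma U2_eq: "Lsig D u yp vbar zbar xbar + ereal (sig / 2 * sqn (pd_Tf D) (u - ubar))
   = pd_f D u + pd_g D vbar + ereal (q0 u)"
  by (simp add: q0_def Lsig_eq ereal_add_assoc2)

end



context sgs2 begin

definition "dv k = yp k - ybar k"

lemma dv_in: "k \<in> {1..pp} \<Longrightarrow> dv k \<in> pd_SY D k"
  unfolding dv_def using subspace_diff[OF blk(1) yp_in ybar_in] by auto

lemma Gam_tail:
  assumes i: "i \<in> {1..pp}"
  shows "Rc i ubar ybar + adjoint (pd_A D i) (ybar i)
     = Gam D ubar ybar vbar zbar + (\<Sum>k\<in>{i+1..pp}. adjoint (pd_A D k) (dv k))"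
proof -
  have "AY (mixY ybar i (ybar i) yp) - AY ybar
      = (\<Sum>k\<in>{1..pp}. adjoint (pd_A D k) (mixY ybar i (ybar i) yp k) - adjoint (pd_A D k) (ybar k))"
    unfolding AY_def by (simp add: sum_subtractf)
  also have "\<dots> = (\<Sum>k\<in>{1..pp}. if k \<in> {i+1..pp} then adjoint (pd_A D k) (dv k) else 0)"
  proof (rule sum.cong)
    fix k assume k: "k \<in> {1..pp}"
    show "adjoint (pd_A D k) (mixY ybar i (ybar i) yp k) - adjoint (pd_A D k) (ybar k)
        = (if k \<in> {i+1..pp} then adjoint (pd_A D k) (dv k) else 0)"
      using k by (cases "k = i") (auto simp: mixY_def dv_def linear_diff[OF linAadj[OF k]])
  qed simp
  also have "\<dots> = (\<Sum>k\<in>{1..pp} \<inter> {i+1..pp}. adjoint (pd_A D k) (dv k))"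
    by (simp only: sum.inter_restrict[OF finite_atLeastAtMost])
  also have "{1..pp} \<inter> {i+1..pp} = {i+1..pp}" using i by auto
  finally have e: "AY (mixY ybar i (ybar i) yp) = AY ybar + (\<Sum>k\<in>{i+1..pp}. adjoint (pd_A D k) (dv k))"
    by (simp add: algebra_simps)
  have "Rc i ubar ybar + adjoint (pd_A D i) (ybar i) = Gam D ubar (mixY ybar i (ybar i) yp) vbar zbar"
    using Gam_mix[OF i, of ubar ybar "ybar i"] by simp
  then show ?thesis unfolding Gam_eq e by (simp add: algebra_simps)
qed

lemma wtab_step:
  assumes i: "i \<in> {1..pp}"
  shows "Einv D i (pd_b D i - (\<Sum>k\<in>{i+1..pp}. pd_A D i (sig *\<^sub>R adjoint (pd_A D k) (dv k)))
           - pd_A D i xbar - pd_P D i (ybar i) + sig *\<^sub>R pd_A D i (- Gam D ubar ybar vbar zbar))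
         = sig *\<^sub>R dv i"
proof (rule Einv_unique[OF i])
  show "sig *\<^sub>R dv i \<in> pd_SY D i" using dv_in[OF i] by (rule subspace_scale[OF blk(1)[OF i]])
  let ?A = "pd_A D i" and ?At = "adjoint (pd_A D i)"
  define S where "S = (\<Sum>k\<in>{i+1..pp}. adjoint (pd_A D k) (dv k))"
  have lA: "linear ?A" using blk(2)[OF i] .
  have lE: "linear (pd_E D i)" using blk(8)[OF i] .
  have e1: "pd_E D i (yp i) = ee i ubar ybar" using yp_M[OF i] M_in(2)[OF i] by simp
  have e2: "pd_E D i (ybar i) = Ttheta D i (ybar i) + (1/sig) *\<^sub>R pd_P D i (ybar i) + ?A (?At (ybar i))"
    by (rule E_eq[OF i])
  have sumA: "(\<Sum>k\<in>{i+1..pp}. ?A (sig *\<^sub>R adjoint (pd_A D k) (dv k))) = sig *\<^sub>R ?A S"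
    unfolding S_def by (simp add: linear_sum[OF lA] linear_scale[OF lA] scaleR_sum_right)
  have GT: "Rc i ubar ybar + ?At (ybar i) = Gam D ubar ybar vbar zbar + S"
    unfolding S_def by (rule Gam_tail[OF i])
  have "pd_E D i (sig *\<^sub>R dv i) = sig *\<^sub>R (ee i ubar ybar - pd_E D i (ybar i))"
    unfolding dv_def linear_scale[OF lE] linear_diff[OF lE] e1 ..
  also have "\<dots> = pd_b D i - pd_A D i xbar - pd_P D i (ybar i) - sig *\<^sub>R ?A (Rc i ubar ybar + ?At (ybar i))"
    unfolding e2 ee_def using sig_pos
    by (simp add: linear_add[OF lA] algebra_simps scaleR_diff_right)
  also have "\<dots> = pd_b D i - sig *\<^sub>R ?A S - pd_A D i xbar - pd_P D i (ybar i)
       + sig *\<^sub>R pd_A D i (- Gam D ubar ybar vbar zbar)"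
    unfolding GT by (simp add: linear_add[OF lA] linear_neg[OF lA] algebra_simps)
  finally show "pd_E D i (sig *\<^sub>R dv i) = pd_b D i - (\<Sum>k\<in>{i+1..pp}. ?A (sig *\<^sub>R adjoint (pd_A D k) (dv k)))
           - pd_A D i xbar - pd_P D i (ybar i) + sig *\<^sub>R pd_A D i (- Gam D ubar ybar vbar zbar)"
    unfolding sumA .
qed

lemma wtab_eq: "n \<le> pp \<Longrightarrow> \<forall>k\<in>{pp - n + 1..pp}.
   wtab D ybar xbar (- Gam D ubar ybar vbar zbar) n k = sig *\<^sub>R adjoint (pd_A D k) (dv k)"
proof (induction n)
  case 0 then show ?case by auto
next
  case (Suc n)
  define i where "i = pp - n"
  have i: "i \<in> {1..pp}" using Suc.prems p_pos unfolding i_def by auto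
  have IH: "\<forall>k\<in>{i+1..pp}. wtab D ybar xbar (- Gam D ubar ybar vbar zbar) n k = sig *\<^sub>R adjoint (pd_A D k) (dv k)"
    using Suc by (simp add: i_def)
  have sm: "(\<Sum>k\<in>{i+1..pp}. pd_A D i (wtab D ybar xbar (- Gam D ubar ybar vbar zbar) n k))
     = (\<Sum>k\<in>{i+1..pp}. pd_A D i (sig *\<^sub>R adjoint (pd_A D k) (dv k)))"
    using IH by (intro sum.cong) auto
  have rng: "{pp - Suc n + 1..pp} = insert i {i+1..pp}" using Suc.prems unfolding i_def by auto
  show ?case
    unfolding rng using IH wtab_step[OF i] sm
    by (simp add: Let_def i_def[symmetric] linear_scale[OF linAadj[OF i]])
qed


definition "DD = (\<Sum>k\<in>{1..pp}. adjoint (pd_A D k) (dv k))"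

lemma delta_eq: "delta_theta D ubar ybar vbar zbar xbar = pd_F D (sig *\<^sub>R DD)"
proof -
  have w: "\<forall>k\<in>{1..pp}. wtab D ybar xbar (- Gam D ubar ybar vbar zbar) pp k = sig *\<^sub>R adjoint (pd_A D k) (dv k)"
    using wtab_eq[of pp] by simp
  have "delta_theta D ubar ybar vbar zbar xbar = (\<Sum>k\<in>{1..pp}. pd_F D (sig *\<^sub>R adjoint (pd_A D k) (dv k)))"
    unfolding delta_theta_def beta_def Aop_def using w by (intro sum.cong) auto
  also have "\<dots> = pd_F D (sig *\<^sub>R DD)"
    unfolding DD_def by (simp add: linear_sum[OF linF] scaleR_sum_right)
  finally show ?thesis .
qed

lemma RL_aux: "RL u yp - RL u ybar - pd_F D (sig *\<^sub>R DD) \<bullet> u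
   = (\<Sum>i\<in>{1..pp}. theta D i (yp i)) - (\<Sum>i\<in>{1..pp}. theta D i (ybar i)) + xbar \<bullet> DD
     + sig * ((AY ybar + c0) \<bullet> DD) + sig/2 * (DD \<bullet> DD)"
proof -
  define a where "a = adjoint (pd_F D) u"
  define B where "B = AY ybar + c0"
  have "DD = (\<Sum>k\<in>{1..pp}. adjoint (pd_A D k) (yp k) - adjoint (pd_A D k) (ybar k))"
    unfolding DD_def dv_def by (rule sum.cong) (auto simp: linear_diff[OF linAadj])
  then have AYd: "AY yp = AY ybar + DD"
    unfolding AY_def by (simp add: sum_subtractf)
  have g1: "Gam D u yp vbar zbar = (a + B) + DD" unfolding Gam_eq AYd a_def B_def by (simp add: algebra_simps)
  have g2: "Gam D u ybar vbar zbar = a + B" unfolding Gam_eq a_def B_def by (simp add: algebra_simps)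
  have n: "(norm ((a + B) + DD))\<^sup>2 = (norm (a + B))\<^sup>2 + 2 * (a \<bullet> DD) + 2 * (B \<bullet> DD) + DD \<bullet> DD"
    unfolding power2_norm_eq_inner by (simp add: inner_add_left inner_add_right inner_commute)
  have fu: "pd_F D (sig *\<^sub>R DD) \<bullet> u = sig * (a \<bullet> DD)"
    unfolding a_def using adjoint_works[OF linF, of DD u]
    by (simp add: linear_scale[OF linF] inner_commute)
  have x: "xbar \<bullet> ((a + B) + DD) = xbar \<bullet> (a + B) + xbar \<bullet> DD" by (simp add: inner_add_right)
  show ?thesis
    unfolding RL_def g1 g2 n fu x B_def[symmetric] by (simp add: algebra_simps)
qed

lemma RL_rel: "RL u ybar + delta_theta D ubar ybar vbar zbar xbar \<bullet> u = RL u yp - (RL 0 yp - RL 0 ybar)"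
  using RL_aux[of u] RL_aux[of 0] unfolding delta_eq by simp

end

lemma argmin_cong: "(\<And>y. P y \<Longrightarrow> f y = g y) \<Longrightarrow> is_arg_min f P x \<longleftrightarrow> is_arg_min g P x"
  unfolding is_arg_min_def by auto

lemma ereal_shift_less: "(a::ereal) + ereal K < b + ereal K \<longleftrightarrow> a < b"
  by (cases a; cases b) auto

lemma argmin_shift: "is_arg_min (\<lambda>u. h u + ereal K) P x \<longleftrightarrow> is_arg_min h P x"
  unfolding is_arg_min_def using ereal_shift_less by auto




lemma ereal_shift_le: "(a::ereal) + ereal K \<le> b + ereal K \<longleftrightarrow> a \<le> b"
  by (cases a; cases b) auto

context sgs2 begin

lemma f_exists: "\<exists>u0. pd_f D u0 \<noteq> \<infinity>" using f_proper by (auto simp: proper_fun_def)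

lemma fg_inf: "pd_f D u = \<infinity> \<Longrightarrow> pd_f D u + pd_g D vbar + ereal r = \<infinity>"
  using g_ninf by (cases "pd_g D vbar") auto

lemma main2:
  assumes yplus: "yplus \<in> PiE {1..pp} (pd_SY D)"
  shows "is_arg_min (\<lambda>(u, ys). pd_f D u + pd_g D vbar + ereal (q pp u ys))
            (\<lambda>(u, ys). ys \<in> PiE {1..pp} (pd_SY D)) (uplus, yplus)
     \<longleftrightarrow> is_arg_min (\<lambda>u. pd_f D u + pd_g D vbar + ereal (q0 u)) (\<lambda>u. True) uplus
       \<and> (\<forall>i\<in>{1..pp}. is_arg_min (\<lambda>w. pd_f D uplus + pd_g D vbar + ereal (s i uplus yplus w))
                        (\<lambda>w. w \<in> pd_SY D i) (yplus i))"
proof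
  assume A: "is_arg_min (\<lambda>(u, ys). pd_f D u + pd_g D vbar + ereal (q pp u ys))
            (\<lambda>(u, ys). ys \<in> PiE {1..pp} (pd_SY D)) (uplus, yplus)"
  have le: "pd_f D uplus + pd_g D vbar + ereal (q pp uplus yplus) \<le> pd_f D u + pd_g D vbar + ereal (q pp u ys)"
    if "ys \<in> PiE {1..pp} (pd_SY D)" for u ys
    using A that unfolding is_arg_min_def by (auto simp: not_less)
  obtain u0 where u0: "pd_f D u0 \<noteq> \<infinity>" using f_exists by blast
  have fin: "pd_f D uplus \<noteq> \<infinity>"
  proof
    assume "pd_f D uplus = \<infinity>"
    then have "pd_f D uplus + pd_g D vbar + ereal (q pp uplus yplus) = \<infinity>" by (rule fg_inf)
    moreover have "pd_f D u0 + pd_g D vbar + ereal (q pp u0 (yst u0)) \<noteq> \<infinity>"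
      using fg_fin[OF u0] by (cases "pd_f D u0 + pd_g D vbar") auto
    ultimately show False using le[of "yst u0" u0, OF yst_in] by auto
  qed
  obtain c where c: "pd_f D uplus + pd_g D vbar = ereal c"
    using fg_fin[OF fin] by (cases "pd_f D uplus + pd_g D vbar") auto
  have "ereal (c + q pp uplus yplus) \<le> ereal (c + (q0 uplus + Cs))"
    using le[of "yst uplus" uplus, OF yst_in] q_yst[of uplus] c by simp
  then have qle: "q pp uplus yplus \<le> q0 uplus + Cs" by simp
  have yfix: "yplus k = M k uplus yplus" if "k \<in> {1..pp}" for k
    using q_eq_M[OF yplus qle that] .
  have U: "is_arg_min (\<lambda>u. pd_f D u + pd_g D vbar + ereal (q0 u)) (\<lambda>u. True) uplus"
    unfolding is_arg_min_def
  proof (simp add: not_less, intro allI)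
    fix u
    have "ereal (c + (q0 uplus + Cs)) \<le> ereal (c + q pp uplus yplus)"
      using q_ge[OF yplus, of uplus] by simp
    also have "\<dots> \<le> pd_f D u + pd_g D vbar + ereal (q pp u (yst u))"
      using le[of "yst u" u, OF yst_in] c by simp
    also have "\<dots> = pd_f D u + pd_g D vbar + ereal (q0 u) + ereal Cs"
      using q_yst[of u] by (simp add: ereal_add_assoc2)
    finally have "ereal c + ereal (q0 uplus) + ereal Cs \<le> pd_f D u + pd_g D vbar + ereal (q0 u) + ereal Cs"
      by (simp add: add.assoc)
    then show "pd_f D uplus + pd_g D vbar + ereal (q0 uplus) \<le> pd_f D u + pd_g D vbar + ereal (q0 u)"
      unfolding ereal_shift_le c .
  qed
  have S: "is_arg_min (\<lambda>w. pd_f D uplus + pd_g D vbar + ereal (s i uplus yplus w))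
                        (\<lambda>w. w \<in> pd_SY D i) (yplus i)" if i: "i \<in> {1..pp}" for i
    unfolding is_arg_min_def
  proof (intro conjI)
    show "yplus i \<in> pd_SY D i" using yplus i by auto
    show "\<not> (\<exists>w. w \<in> pd_SY D i \<and> pd_f D uplus + pd_g D vbar + ereal (s i uplus yplus w)
             < pd_f D uplus + pd_g D vbar + ereal (s i uplus yplus (yplus i)))"
    proof clarify
      fix w assume w: "w \<in> pd_SY D i"
        and lt: "pd_f D uplus + pd_g D vbar + ereal (s i uplus yplus w)
             < pd_f D uplus + pd_g D vbar + ereal (s i uplus yplus (yplus i))"
      have "s i uplus yplus (yplus i) \<le> s i uplus yplus w"
        using s_min[OF i w, of uplus yplus] yfix[OF i] by (cases "w = M i uplus yplus") auto
      then show False using lt c by simp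
    qed
  qed
  show "is_arg_min (\<lambda>u. pd_f D u + pd_g D vbar + ereal (q0 u)) (\<lambda>u. True) uplus
       \<and> (\<forall>i\<in>{1..pp}. is_arg_min (\<lambda>w. pd_f D uplus + pd_g D vbar + ereal (s i uplus yplus w))
                        (\<lambda>w. w \<in> pd_SY D i) (yplus i))"
    using U S by blast
next
  assume B: "is_arg_min (\<lambda>u. pd_f D u + pd_g D vbar + ereal (q0 u)) (\<lambda>u. True) uplus
       \<and> (\<forall>i\<in>{1..pp}. is_arg_min (\<lambda>w. pd_f D uplus + pd_g D vbar + ereal (s i uplus yplus w))
                        (\<lambda>w. w \<in> pd_SY D i) (yplus i))"
  have leU: "pd_f D uplus + pd_g D vbar + ereal (q0 uplus) \<le> pd_f D u + pd_g D vbar + ereal (q0 u)" for u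
    using B unfolding is_arg_min_def by (auto simp: not_less)
  obtain u0 where u0: "pd_f D u0 \<noteq> \<infinity>" using f_exists by blast
  have fin: "pd_f D uplus \<noteq> \<infinity>"
  proof
    assume "pd_f D uplus = \<infinity>"
    then have "pd_f D uplus + pd_g D vbar + ereal (q0 uplus) = \<infinity>" by (rule fg_inf)
    moreover have "pd_f D u0 + pd_g D vbar + ereal (q0 u0) \<noteq> \<infinity>"
      using fg_fin[OF u0] by (cases "pd_f D u0 + pd_g D vbar") auto
    ultimately show False using leU[of u0] by auto
  qed
  obtain c where c: "pd_f D uplus + pd_g D vbar = ereal c"
    using fg_fin[OF fin] by (cases "pd_f D uplus + pd_g D vbar") auto
  have yfix: "yplus i = M i uplus yplus" if i: "i \<in> {1..pp}" for i
  proof (rule ccontr)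
    assume ne: "yplus i \<noteq> M i uplus yplus"
    have "s i uplus yplus (M i uplus yplus) < s i uplus yplus (yplus i)"
      using s_min[OF i _ ne] yplus i by (auto simp: PiE_iff)
    then have "pd_f D uplus + pd_g D vbar + ereal (s i uplus yplus (M i uplus yplus))
       < pd_f D uplus + pd_g D vbar + ereal (s i uplus yplus (yplus i))" using c by simp
    then show False using B i M_in(1)[OF i, of uplus yplus] unfolding is_arg_min_def by blast
  qed
  have qeq: "q pp uplus yplus = q0 uplus + Cs"
    using q_full[OF yplus, of uplus] yfix by (simp add: sqn_def linear_0[OF blk(8)])
  show "is_arg_min (\<lambda>(u, ys). pd_f D u + pd_g D vbar + ereal (q pp u ys))
            (\<lambda>(u, ys). ys \<in> PiE {1..pp} (pd_SY D)) (uplus, yplus)"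
    unfolding is_arg_min_def
  proof (intro conjI)
    show "(\<lambda>(u, ys). ys \<in> PiE {1..pp} (pd_SY D)) (uplus, yplus)" using yplus by simp
    show "\<not> (\<exists>y. (\<lambda>(u, ys). ys \<in> PiE {1..pp} (pd_SY D)) y \<and>
          (\<lambda>(u, ys). pd_f D u + pd_g D vbar + ereal (q pp u ys)) y
          < (\<lambda>(u, ys). pd_f D u + pd_g D vbar + ereal (q pp u ys)) (uplus, yplus))"
    proof clarify
      fix u ys assume ys: "ys \<in> PiE {1..pp} (pd_SY D)"
        and lt: "pd_f D u + pd_g D vbar + ereal (q pp u ys) < pd_f D uplus + pd_g D vbar + ereal (q pp uplus yplus)"
      have "pd_f D uplus + pd_g D vbar + ereal (q pp uplus yplus)
          = pd_f D uplus + pd_g D vbar + ereal (q0 uplus) + ereal Cs"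
        unfolding qeq by (simp add: ereal_add_assoc2)
      also have "\<dots> \<le> pd_f D u + pd_g D vbar + ereal (q0 u) + ereal Cs"
        unfolding ereal_shift_le by (rule leU)
      also have "\<dots> = pd_f D u + pd_g D vbar + ereal (q0 u + Cs)"
        by (simp add: ereal_add_assoc2)
      also have "\<dots> \<le> pd_f D u + pd_g D vbar + ereal (q pp u ys)"
        using q_ge[OF ys, of u] by (intro add_left_mono) simp
      finally show False using lt by simp
    qed
  qed
qed

end



theorem proposition3p1:
  fixes D :: "('u::euclidean_space, 'v::euclidean_space, 'x::euclidean_space,
               'y::euclidean_space, 'z::euclidean_space) prob_data"
    and ubar :: 'u and ybar :: "nat \<Rightarrow> 'y" and vbar :: 'v and zbar :: "nat \<Rightarrow> 'z"
    and xbar :: 'x and yp :: "nat \<Rightarrow> 'y"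
    and uplus :: 'u and yplus :: "nat \<Rightarrow> 'y"
  assumes wf: "wf_data D"
    and ybar: "ybar \<in> PiE {1..pd_p D} (pd_SY D)"
    and zbar: "zbar \<in> PiE {1..pd_q D} (pd_SZ D)"
    and ubar_dom: "pd_f D ubar \<noteq> \<infinity>"
    and yp: "yp \<in> PiE {1..pd_p D} (pd_SY D)"
    and yp_min: "\<forall>i\<in>{1..pd_p D}.
       is_arg_min (\<lambda>w. Lsig D ubar (mixY ybar i w yp) vbar zbar xbar
                        + ereal (pd_sigma D / 2 * sqn (Ttheta D i) (w - ybar i)))
                  (\<lambda>w. w \<in> pd_SY D i) (yp i)"
    and yplus: "yplus \<in> PiE {1..pd_p D} (pd_SY D)"
  shows
   "(is_arg_min
       (\<lambda>(u, ys). Lsig D u ys vbar zbar xbar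
          + ereal (pd_sigma D / 2 * ip_blk D (pd_p D) (u - ubar, (\<lambda>k. ys k - ybar k))
                      (That D (pd_p D) (u - ubar, (\<lambda>k. ys k - ybar k)))
                 + pd_sigma D / 2 * sqn (Ttheta D (pd_p D)) (ys (pd_p D) - ybar (pd_p D))))
       (\<lambda>(u, ys). ys \<in> PiE {1..pd_p D} (pd_SY D)) (uplus, yplus)
     \<longleftrightarrow>
     is_arg_min (\<lambda>u. Lsig D u ybar vbar zbar xbar
          + ereal (delta_theta D ubar ybar vbar zbar xbar \<bullet> u
                   + pd_sigma D / 2 * sqn (pd_Tf D) (u - ubar))) (\<lambda>u. True) uplus
     \<and> (\<forall>i\<in>{1..pd_p D}.
          is_arg_min (\<lambda>w. Lsig D uplus (mixY yplus i w yp) vbar zbar xbar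
                          + ereal (pd_sigma D / 2 * sqn (Ttheta D i) (w - ybar i)))
                     (\<lambda>w. w \<in> pd_SY D i) (yplus i)))
  \<and>
   (is_arg_min
       (\<lambda>(u, ys). Lsig D u ys vbar zbar xbar
          + ereal (pd_sigma D / 2 * ip_blk D (pd_p D) (u - ubar, (\<lambda>k. ys k - ybar k))
                      (That D (pd_p D) (u - ubar, (\<lambda>k. ys k - ybar k)))
                 + pd_sigma D / 2 * sqn (Ttheta D (pd_p D)) (ys (pd_p D) - ybar (pd_p D))))
       (\<lambda>(u, ys). ys \<in> PiE {1..pd_p D} (pd_SY D)) (uplus, yplus)
     \<longleftrightarrow>
     is_arg_min (\<lambda>u. Lsig D u yp vbar zbar xbar
          + ereal (pd_sigma D / 2 * sqn (pd_Tf D) (u - ubar))) (\<lambda>u. True) uplus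
     \<and> (\<forall>i\<in>{1..pd_p D}.
          is_arg_min (\<lambda>w. Lsig D uplus (mixY yplus i w yp) vbar zbar xbar
                          + ereal (pd_sigma D / 2 * sqn (Ttheta D i) (w - ybar i)))
                     (\<lambda>w. w \<in> pd_SY D i) (yplus i)))"
proof -
  let ?P = "\<lambda>(u::'u, ys). ys \<in> PiE {1..pd_p D} (pd_SY D)"
  let ?J = "\<lambda>(u, ys). Lsig D u ys vbar zbar xbar
          + ereal (pd_sigma D / 2 * ip_blk D (pd_p D) (u - ubar, (\<lambda>k. ys k - ybar k))
                      (That D (pd_p D) (u - ubar, (\<lambda>k. ys k - ybar k)))
                 + pd_sigma D / 2 * sqn (Ttheta D (pd_p D)) (ys (pd_p D) - ybar (pd_p D)))"
  let ?U1 = "\<lambda>u. Lsig D u ybar vbar zbar xbar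
          + ereal (delta_theta D ubar ybar vbar zbar xbar \<bullet> u
                   + pd_sigma D / 2 * sqn (pd_Tf D) (u - ubar))"
  let ?U2 = "\<lambda>u. Lsig D u yp vbar zbar xbar
          + ereal (pd_sigma D / 2 * sqn (pd_Tf D) (u - ubar))"
  let ?S = "\<lambda>i w. Lsig D uplus (mixY yplus i w yp) vbar zbar xbar
                          + ereal (pd_sigma D / 2 * sqn (Ttheta D i) (w - ybar i))"
  show ?thesis
  proof (cases "pd_g D vbar = \<infinity>")
    case True
    have gn: "pd_g D vbar \<noteq> -\<infinity>" and fn: "\<And>u. pd_f D u \<noteq> -\<infinity>"
      using wf unfolding wf_data_def closed_proper_convex_def proper_fun_def by blast+
    have Linf: "Lsig D u ys vbar zbar xbar + ereal r = \<infinity>" for u ys r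
      unfolding Lsig_def using True fn[of u] by (cases "pd_f D u") auto
    have triv: "is_arg_min (\<lambda>a. \<infinity>::ereal) P x \<longleftrightarrow> P x" for P and x :: "'b"
      unfolding is_arg_min_def by auto
    have e1: "is_arg_min ?J ?P (uplus, yplus) \<longleftrightarrow> True"
      using triv[of ?P "(uplus, yplus)"] yplus Linf
      by (simp add: argmin_cong[of ?P ?J "\<lambda>a. \<infinity>"] split_def)
    have e2: "is_arg_min ?U1 (\<lambda>u. True) uplus" "is_arg_min ?U2 (\<lambda>u. True) uplus"
      unfolding is_arg_min_def using Linf by auto
    have e3: "\<forall>i\<in>{1..pd_p D}. is_arg_min (?S i) (\<lambda>w. w \<in> pd_SY D i) (yplus i)"
      unfolding is_arg_min_def using Linf yplus by (auto simp: PiE_iff)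
    show ?thesis using e1 e2 e3 by simp
  next
    case False
    interpret sgs2 D ubar ybar vbar zbar xbar yp
      by unfold_locales (use wf ybar yp False ubar_dom yp_min in auto)
    have eJ: "is_arg_min ?J ?P (uplus, yplus) \<longleftrightarrow>
        is_arg_min (\<lambda>(u, ys). pd_f D u + pd_g D vbar + ereal (q pp u ys)) ?P (uplus, yplus)"
    proof (rule argmin_cong)
      fix y assume "?P y"
      then show "?J y = (\<lambda>(u, ys). pd_f D u + pd_g D vbar + ereal (q pp u ys)) y"
        by (cases y) (simp only: case_prod_conv J_eq)
    qed
    have eS: "is_arg_min (?S i) (\<lambda>w. w \<in> pd_SY D i) (yplus i) \<longleftrightarrow>
        is_arg_min (\<lambda>w. pd_f D uplus + pd_g D vbar + ereal (s i uplus yplus w)) (\<lambda>w. w \<in> pd_SY D i) (yplus i)" for i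
      by (rule argmin_cong) (rule obj_eq)
    have eU2: "?U2 = (\<lambda>u. pd_f D u + pd_g D vbar + ereal (q0 u))"
      by (rule ext) (rule U2_eq)
    have eU1: "?U1 = (\<lambda>u. (pd_f D u + pd_g D vbar + ereal (q0 u)) + ereal (- (RL 0 yp - RL 0 ybar)))"
    proof (rule ext)
      fix u
      have "RL u ybar + (delta_theta D ubar ybar vbar zbar xbar \<bullet> u + sig / 2 * sqn (pd_Tf D) (u - ubar))
          = q0 u + - (RL 0 yp - RL 0 ybar)"
        using RL_rel[of u] unfolding q0_def by simp
      then show "?U1 u = (pd_f D u + pd_g D vbar + ereal (q0 u)) + ereal (- (RL 0 yp - RL 0 ybar))"
        by (simp add: Lsig_eq ereal_add_assoc2)
    qed
    have U12: "is_arg_min ?U1 (\<lambda>u. True) uplus \<longleftrightarrow> is_arg_min ?U2 (\<lambda>u. True) uplus"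
      unfolding eU1 eU2 by (rule argmin_shift)
    show ?thesis
      unfolding U12 eJ eS eU2 using main2[OF yplus] by simp
  qed
qed


end
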